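(* $\mathcal{F}_1^{\sigma_1}\not\leq_e\mathcal{F}_2^{\sigma_2}$ and $\mathcal{F}_2^{\sigma_2}\not\leq_e\mathcal{F}_1^{\sigma_1}$ for all formalisms $\mathcal{F}_1,\mathcal{F}_2\in\{\mathrm{AF},\mathrm{SETAF},\mathrm{BADF},\mathrm{ADF}\}$ and all semantics $\sigma_1,\sigma_2\in\{\mathrm{adm},\mathrm{com},\mathrm{prf},\mathrm{mod}\}$ with $\sigma_1\neq\sigma_2$.
   Context: Let $A$ be a finite set of statements; an interpretation is $v:A\to\{\mathbf{t},\mathbf{f},\mathbf{u}\}$. The information ordering is $\mathbf{u}<_i\mathbf{t}$, $\mathbf{u}<_i\mathbf{f}$, extended pointwise; $[v]_2$ is the set of two-valued interpretations extending $v$. An ADF is $D=(A,L,C)$ with an acceptance formula $\varphi_a$ over the parents of each statement $a$. $\Gamma_D(v)(a)$ is the greatest lower bound w.r.t. $\leq_i$ (consensus: $\mathbf{t}$ if all $\mathbf{t}$, $\mathbf{f}$ if all $\mathbf{f}$, else $\mathbf{u}$) of $\{w(\varphi_a)\mid w\in[v]_2\}$. $v$ is admissible iff $v\leq_i\Gamma_D(v)$, complete iff $\Gamma_D(v)=v$, preferred iff $\leq_i$-maximal admissible, a two-valued model iff two-valued and $\Gamma_D(v)=v$. BADFs are ADFs in which every link is supporting or attacking; AFs $(A,R)$ correspond to ADFs with $\varphi_a=\bigwedge_{(b,a)\in R}\neg b$; SETAFs $(A,X)$ correspond to ADFs with $\varphi_a=\bigwedge_{(B,a)\in X}\bigvee_{a'\in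 B}\neg a'$; all inherit the four semantics. The signature of formalism $\mathcal{F}$ under semantics $\sigma$ is $\Sigma^\sigma_\mathcal{F}=\{\sigma(kb)\mid kb\in\mathcal{F}\}$, and $\mathcal{F}_1^{\sigma_1}\leq_e\mathcal{F}_2^{\sigma_2}$ iff $\Sigma^{\sigma_1}_{\mathcal{F}_1}\subseteq\Sigma^{\sigma_2}_{\mathcal{F}_2}$ (taken over the same vocabularies). *)

theory Defs
  imports Main
begin

datatype tv = T | F | U

definition interps :: "nat set \<Rightarrow> (nat \<Rightarrow> tv) set" where
  "interps A = {v. \<forall>x. x \<notin> A \<longrightarrow> v x = U}"

definition info_le :: "(nat \<Rightarrow> tv) \<Rightarrow> (nat \<Rightarrow> tv) \<Rightarrow> bool" where
  "info_le v w \<longleftrightarrow> (\<forall>a. v a = U \<or> v a = w a)"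

definition two_valued_on :: "nat set \<Rightarrow> (nat \<Rightarrow> tv) \<Rightarrow> bool" where
  "two_valued_on A v \<longleftrightarrow> (\<forall>a\<in>A. v a \<noteq> U)"

text \<open>[v]_2: two-valued interpretations over A extending v (as Boolean valuations, False outside A).\<close>
definition completions :: "nat set \<Rightarrow> (nat \<Rightarrow> tv) \<Rightarrow> (nat \<Rightarrow> bool) set" where
  "completions A v = {w. (\<forall>a\<in>A. (v a = T \<longrightarrow> w a) \<and> (v a = F \<longrightarrow> \<not> w a))
                         \<and> (\<forall>x. x \<notin> A \<longrightarrow> \<not> w x)}"

text \<open>An ADF (A, L, C): C a is the acceptance condition of a, i.e. the Boolean function
  computed by the acceptance formula phi_a (w(phi_a) = C a w).\<close>
record adf =
  stmts :: "nat set"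
  links :: "(nat \<times> nat) set"
  acc :: "nat \<Rightarrow> (nat \<Rightarrow> bool) \<Rightarrow> bool"

definition wf_adf :: "adf \<Rightarrow> bool" where
  "wf_adf D \<longleftrightarrow> finite (stmts D) \<and> links D \<subseteq> stmts D \<times> stmts D \<and>
     (\<forall>a\<in>stmts D. \<forall>w w'. (\<forall>b. (b, a) \<in> links D \<longrightarrow> w b = w' b) \<longrightarrow> acc D a w = acc D a w')"

definition Gamma :: "adf \<Rightarrow> (nat \<Rightarrow> tv) \<Rightarrow> (nat \<Rightarrow> tv)" where
  "Gamma D v a =
     (if a \<notin> stmts D then U
      else if (\<forall>w\<in>completions (stmts D) v. acc D a w) then T
      else if (\<forall>w\<in>completions (stmts D) v. \<not> acc D a w) then F
      else U)"

definition adm :: "adf \<Rightarrow> (nat \<Rightarrow> tv) set" where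
  "adm D = {v \<in> interps (stmts D). info_le v (Gamma D v)}"

definition cmp :: "adf \<Rightarrow> (nat \<Rightarrow> tv) set" where
  "cmp D = {v \<in> interps (stmts D). Gamma D v = v}"

definition prefd :: "adf \<Rightarrow> (nat \<Rightarrow> tv) set" where
  "prefd D = {v \<in> adm D. \<forall>v'\<in>adm D. info_le v v' \<longrightarrow> info_le v' v}"

definition mdl :: "adf \<Rightarrow> (nat \<Rightarrow> tv) set" where
  "mdl D = {v \<in> interps (stmts D). two_valued_on (stmts D) v \<and> Gamma D v = v}"

definition supporting :: "adf \<Rightarrow> nat \<Rightarrow> nat \<Rightarrow> bool" where
  "supporting D b a \<longleftrightarrow> (\<forall>w. acc D a w \<longrightarrow> acc D a (w(b := True)))"

definition attacking :: "adf \<Rightarrow> nat \<Rightarrow> nat \<Rightarrow> bool" where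
  "attacking D b a \<longleftrightarrow> (\<forall>w. acc D a w \<longrightarrow> acc D a (w(b := False)))"

definition badf :: "adf \<Rightarrow> bool" where
  "badf D \<longleftrightarrow> wf_adf D \<and> (\<forall>(b, a)\<in>links D. supporting D b a \<or> attacking D b a)"

definition adf_of_af :: "nat set \<Rightarrow> (nat \<times> nat) set \<Rightarrow> adf" where
  "adf_of_af A R = \<lparr>stmts = A, links = R, acc = (\<lambda>a w. \<forall>b. (b, a) \<in> R \<longrightarrow> \<not> w b)\<rparr>"

definition adf_of_setaf :: "nat set \<Rightarrow> (nat set \<times> nat) set \<Rightarrow> adf" where
  "adf_of_setaf A X = \<lparr>stmts = A, links = {(b, a). \<exists>B. (B, a) \<in> X \<and> b \<in> B},
     acc = (\<lambda>a w. \<forall>B. (B, a) \<in> X \<longrightarrow> (\<exists>a'\<in>B. \<not> w a'))\<rparr>"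

datatype formalism = AFs | SETAFs | BADFs | ADFs
datatype semantics = Adm | Com | Prf | Mod

fun kbs :: "formalism \<Rightarrow> adf set" where
  "kbs AFs = {adf_of_af A R | A R. finite A \<and> R \<subseteq> A \<times> A}"
| "kbs SETAFs = {adf_of_setaf A X | A X. finite A \<and> (\<forall>(B, a)\<in>X. B \<subseteq> A \<and> B \<noteq> {} \<and> a \<in> A)}"
| "kbs BADFs = {D. badf D}"
| "kbs ADFs = {D. wf_adf D}"

fun sem :: "semantics \<Rightarrow> adf \<Rightarrow> (nat \<Rightarrow> tv) set" where
  "sem Adm = adm"
| "sem Com = cmp"
| "sem Prf = prefd"
| "sem Mod = mdl"

definition signature :: "formalism \<Rightarrow> semantics \<Rightarrow> nat set \<Rightarrow> (nat \<Rightarrow> tv) set set" where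
  "signature Fm s A = {sem s D | D. D \<in> kbs Fm \<and> stmts D = A}"

definition le_e :: "formalism \<Rightarrow> semantics \<Rightarrow> formalism \<Rightarrow> semantics \<Rightarrow> bool" where
  "le_e F1 s1 F2 s2 \<longleftrightarrow> (\<forall>A. finite A \<longrightarrow> signature F1 s1 A \<subseteq> signature F2 s2 A)"

end

theory Submission
  imports Defs
begin

definition uu :: "nat \<Rightarrow> tv" where "uu = (\<lambda>_. U)"

lemma Gamma_out: "a \<notin> stmts D \<Longrightarrow> Gamma D v a = U"
  by (simp add: Gamma_def)

lemma interps_out: "v \<in> interps A \<Longrightarrow> x \<notin> A \<Longrightarrow> v x = U"
  by (simp add: interps_def)

lemma G1: "stmts D = A \<Longrightarrow> uu \<in> adm D"
  by (auto simp: adm_def interps_def uu_def info_le_def)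

lemma G2: "A \<noteq> {} \<Longrightarrow> stmts D = A \<Longrightarrow> uu \<notin> mdl D"
  by (auto simp: mdl_def two_valued_on_def uu_def)

lemma G3: "uu \<in> prefd D \<Longrightarrow> v \<in> prefd D \<Longrightarrow> v = uu"
proof -
  assume a: "uu \<in> prefd D" "v \<in> prefd D"
  then have "v \<in> adm D" by (simp add: prefd_def)
  moreover have "info_le uu v" by (simp add: info_le_def uu_def)
  ultimately have "info_le v uu" using a(1) by (auto simp: prefd_def)
  then show ?thesis by (auto simp: info_le_def uu_def fun_eq_iff)
qed

lemma compl_mono: "info_le v w \<Longrightarrow> completions A w \<subseteq> completions A v"
proof
  fix x assume h: "info_le v w" "x \<in> completions A w"
  show "x \<in> completions A v" unfolding completions_def
  proof (intro CollectI conjI ballI impI allI)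
    fix a assume "a \<in> A" "v a = T" then show "x a" using h
      by (auto simp: info_le_def completions_def) (metis tv.distinct(3))
  next
    fix a assume "a \<in> A" "v a = F" then show "\<not> x a" using h
      by (auto simp: info_le_def completions_def) (metis tv.distinct(5))
  next
    fix a assume "a \<notin> A" then show "\<not> x a" using h by (auto simp: completions_def)
  qed
qed

lemma compl_ne: "(\<lambda>x. x \<in> A \<and> w x = T) \<in> completions A w"
  by (auto simp: completions_def)

lemma G4: "info_le v w \<Longrightarrow> info_le (Gamma D v) (Gamma D w)"
proof -
  assume h: "info_le v w"
  note ne = compl_ne[of "stmts D" w]
  have s: "completions (stmts D) w \<subseteq> completions (stmts D) v" using compl_mono[OF h] .
  show ?thesis unfolding info_le_def
  proof
    fix a
    show "Gamma D v a = U \<or> Gamma D v a = Gamma D w a"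
      using s ne unfolding Gamma_def by (auto split: if_splits)
  qed
qed

lemma G5:
  assumes "v1 \<in> cmp D" "v2 \<in> cmp D" "\<forall>a. v1 a \<noteq> v2 a \<or> v1 a = U"
  shows "uu \<in> cmp D"
proof -
  have g1: "Gamma D v1 = v1" "Gamma D v2 = v2" using assms by (auto simp: cmp_def)
  have "info_le (Gamma D uu) v1" using G4[of uu v1 D] g1 by (simp add: info_le_def uu_def)
  moreover have "info_le (Gamma D uu) v2" using G4[of uu v2 D] g1 by (simp add: info_le_def uu_def)
  ultimately have "Gamma D uu = uu" using assms(3)
    unfolding info_le_def uu_def fun_eq_iff by metis
  then show ?thesis by (simp add: cmp_def interps_def uu_def Gamma_def)
qed

lemma G6:
  assumes st: "stmts D = {0}" and cu: "uu \<in> cmp D" and ct: "uu(0 := T) \<in> cmp D"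
  shows "uu(0 := F) \<in> cmp D"
proof -
  let ?w0 = "\<lambda>x::nat. False" and ?w1 = "\<lambda>x::nat. x = 0"
  have gu: "Gamma D uu 0 = U" using cu by (auto simp: cmp_def uu_def fun_eq_iff)
  have gt: "Gamma D (uu(0:=T)) 0 = T" using ct by (auto simp: cmp_def fun_eq_iff)
  have w1t: "?w1 \<in> completions {0} (uu(0:=T))" by (simp add: completions_def)
  have a1: "acc D 0 ?w1" using gt w1t st by (auto simp: Gamma_def split: if_splits)
  from gu st obtain w where w: "w \<in> completions {0} uu" "\<not> acc D 0 w"
    by (auto simp: Gamma_def split: if_splits)
  have wz: "\<forall>x. x \<noteq> 0 \<longrightarrow> \<not> w x" using w(1) by (auto simp: completions_def)
  have "w = ?w0 \<or> w = ?w1"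
  proof (cases "w 0")
    case True then have "w = ?w1" using wz by (auto simp: fun_eq_iff)
    then show ?thesis by simp
  next
    case False then have "w = ?w0" using wz by (metis neq0_conv)
    then show ?thesis by simp
  qed
  then have a0: "\<not> acc D 0 ?w0" using w(2) a1 by auto
  have cf: "completions {0} (uu(0:=F)) = {?w0}"
    by (auto simp: completions_def uu_def fun_eq_iff) (metis neq0_conv)
  have "Gamma D (uu(0:=F)) = uu(0:=F)"
  proof
    fix x show "Gamma D (uu(0:=F)) x = (uu(0:=F)) x"
      using a0 cf st by (cases "x = 0") (auto simp: Gamma_def uu_def)
  qed
  then show ?thesis using st by (auto simp: cmp_def interps_def uu_def)
qed

lemma G7:
  assumes fin: "finite (stmts D)"
  shows "prefd D \<noteq> {}"
proof -
  define m where "m v = card {a \<in> stmts D. v a \<noteq> U}" for v :: "nat \<Rightarrow> tv"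
  have "\<forall>y. y \<in> adm D \<longrightarrow> m y < Suc (card (stmts D))"
    using fin by (auto simp: m_def intro!: card_mono le_imp_less_Suc)
  then obtain v where v: "v \<in> adm D" "\<forall>y. y \<in> adm D \<longrightarrow> m y \<le> m v"
    using ex_has_greatest_nat[of "\<lambda>v. v \<in> adm D" uu m] G1[of D] by blast
  have "v \<in> prefd D"
    unfolding prefd_def
  proof (intro CollectI conjI v(1) ballI impI)
    fix v' assume v': "v' \<in> adm D" "info_le v v'"
    have sub: "{a \<in> stmts D. v a \<noteq> U} \<subseteq> {a \<in> stmts D. v' a \<noteq> U}"
      using v'(2) by (auto simp: info_le_def)
    have "card {a \<in> stmts D. v' a \<noteq> U} \<le> card {a \<in> stmts D. v a \<noteq> U}"
      using v(2) v'(1) by (simp add: m_def)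
    then have eq: "{a \<in> stmts D. v a \<noteq> U} = {a \<in> stmts D. v' a \<noteq> U}"
      using card_subset_eq[OF _ sub] card_mono[OF _ sub] fin by fastforce
    have vi: "v' \<in> interps (stmts D)" using v' by (simp add: adm_def)
    show "info_le v' v" unfolding info_le_def
    proof
      fix a
      show "v' a = U \<or> v' a = v a"
      proof (cases "a \<in> stmts D")
        case True then show ?thesis using eq v'(2) by (auto simp: info_le_def)
      next
        case False then show ?thesis using interps_out[OF vi] by auto
      qed
    qed
  qed
  then show ?thesis by auto
qed

lemma af_wf: "finite A \<Longrightarrow> R \<subseteq> A \<times> A \<Longrightarrow> wf_adf (adf_of_af A R)"
  unfolding wf_adf_def adf_of_af_def by auto

lemma af_badf: "finite A \<Longrightarrow> R \<subseteq> A \<times> A \<Longrightarrow> badf (adf_of_af A R)"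
  unfolding badf_def using af_wf[of A R]
  by (auto simp: attacking_def adf_of_af_def)

lemma af_setaf: "adf_of_af A R = adf_of_setaf A ((\<lambda>(b, a). ({b}, a)) ` R)"
  unfolding adf_of_af_def adf_of_setaf_def by (auto simp: fun_eq_iff)

lemma af_kbs: "finite A \<Longrightarrow> R \<subseteq> A \<times> A \<Longrightarrow> adf_of_af A R \<in> kbs Fm"
proof (cases Fm)
  case SETAFs
  assume "finite A" "R \<subseteq> A \<times> A"
  let ?X = "(\<lambda>(b, a). ({b}, a)) ` R"
  have "\<forall>(B, a)\<in>?X. B \<subseteq> A \<and> B \<noteq> {} \<and> a \<in> A" using \<open>R \<subseteq> A \<times> A\<close> by auto
  then have "adf_of_setaf A ?X \<in> kbs SETAFs" using \<open>finite A\<close>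
    unfolding kbs.simps mem_Collect_eq by blast
  then show ?thesis using SETAFs af_setaf[of A R] by simp
qed (use af_wf af_badf in auto)

lemma Gamma_af:
  assumes R: "R \<subseteq> A \<times> A" and a: "a \<in> A"
  shows "Gamma (adf_of_af A R) v a =
    (if \<forall>b. (b, a) \<in> R \<longrightarrow> v b = F then T
     else if \<exists>b. (b, a) \<in> R \<and> v b = T then F else U)"
proof -
  let ?D = "adf_of_af A R"
  let ?C = "completions A v"
  have st: "stmts ?D = A" and ac: "\<And>w. acc ?D a w = (\<forall>b. (b, a) \<in> R \<longrightarrow> \<not> w b)"
    by (simp_all add: adf_of_af_def)
  define w0 where "w0 = (\<lambda>x. x \<in> A \<and> v x = T)"
  have w0: "w0 \<in> ?C" unfolding w0_def by (rule compl_ne)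
  show ?thesis
  proof (cases "\<forall>b. (b, a) \<in> R \<longrightarrow> v b = F")
    case True
    have "\<forall>w\<in>?C. acc ?D a w" using True R unfolding ac completions_def by auto
    then show ?thesis using True a st by (simp add: Gamma_def)
  next
    case nF: False
    show ?thesis
    proof (cases "\<exists>b. (b, a) \<in> R \<and> v b = T")
      case True
      have "\<forall>w\<in>?C. \<not> acc ?D a w" using True R unfolding ac completions_def by auto
      then show ?thesis using True nF a st w0 by (auto simp: Gamma_def)
    next
      case False
      then obtain b where b: "(b, a) \<in> R" "v b = U" using nF by (metis tv.exhaust)
      have bA: "b \<in> A" using b R by auto
      have acc0: "acc ?D a w0" using False R unfolding ac w0_def by auto
      have w1: "w0(b := True) \<in> ?C" using w0 b bA by (auto simp: completions_def)
      have "\<not> acc ?D a (w0(b := True))" using b unfolding ac by auto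
      then show ?thesis using False nF a st w0 w1 acc0 unfolding Gamma_def by auto
    qed
  qed
qed

fun neg :: "tv \<Rightarrow> tv" where "neg T = F" | "neg F = T" | "neg U = U"

definition DT :: adf where "DT = adf_of_af {0} {}"
definition DN :: adf where "DN = adf_of_af {0} {(0,0)}"
definition DM :: adf where "DM = adf_of_af {0,Suc 0} {(0,Suc 0),(Suc 0,0)}"

lemma st_D: "stmts DT = {0}" "stmts DN = {0}" "stmts DM = {0,Suc 0}"
  by (simp_all add: DT_def DN_def DM_def adf_of_af_def)

lemma GT: "Gamma DT v = uu(0 := T)"
proof
  fix x show "Gamma DT v x = (uu(0 := T)) x"
    by (cases "x = 0") (auto simp: Gamma_af DT_def Gamma_out st_D[unfolded DT_def] uu_def)
qed

lemma GN: "Gamma DN v = uu(0 := neg (v 0))"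
proof
  fix x show "Gamma DN v x = (uu(0 := neg (v 0))) x"
    by (cases "x = 0"; cases "v 0") (auto simp: Gamma_af DN_def Gamma_out st_D[unfolded DN_def] uu_def)
qed

lemma GM: "Gamma DM v = uu(0 := neg (v (Suc 0)), Suc 0 := neg (v 0))"
proof
  fix x show "Gamma DM v x = (uu(0 := neg (v (Suc 0)), Suc 0 := neg (v 0))) x"
  proof (cases "x \<in> {0,Suc 0}")
    case False then show ?thesis using Gamma_out[of x DM v] st_D by (auto simp: uu_def)
  next
    case True then show ?thesis
      by (cases "x = 0"; cases "v 0"; cases "v (Suc 0)") (auto simp: Gamma_af DM_def uu_def)
  qed
qed

lemma interps1: "v \<in> interps {0} \<longleftrightarrow> (\<exists>x. v = uu(0 := x))"
  by (auto simp: interps_def uu_def fun_eq_iff)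

lemma interps2: "v \<in> interps {0,Suc 0} \<longleftrightarrow> (\<exists>x y. v = uu(0 := x, Suc 0 := y))"
  by (auto simp: interps_def uu_def fun_eq_iff)

lemma upd_eq1: "(uu(0 := x) = uu(0 := y)) \<longleftrightarrow> x = y"
  by (auto simp: fun_eq_iff uu_def)
lemma upd_eq2: "(uu(0 := x, Suc 0 := y) = uu(0 := x', Suc 0 := y')) \<longleftrightarrow> x = x' \<and> y = y'"
  by (auto simp: fun_eq_iff uu_def) 
lemma upd_uu1: "(uu(0 := x) = uu) \<longleftrightarrow> x = U" "(uu = uu(0 := x)) \<longleftrightarrow> x = U"
  by (auto simp: fun_eq_iff uu_def)
lemma upd_uu2: "(uu(0 := x, Suc 0 := y) = uu) \<longleftrightarrow> x = U \<and> y = U"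
   "(uu = uu(0 := x, Suc 0 := y)) \<longleftrightarrow> x = U \<and> y = U"
  by (auto simp: fun_eq_iff uu_def) 
lemma il1: "info_le (uu(0 := x)) (uu(0 := y)) \<longleftrightarrow> x = U \<or> x = y"
  by (auto simp: info_le_def uu_def)
lemma il2: "info_le (uu(0 := x, Suc 0 := y)) (uu(0 := x', Suc 0 := y')) \<longleftrightarrow> (x = U \<or> x = x') \<and> (y = U \<or> y = y')"
  by (auto simp: info_le_def uu_def) 

lemma upd_U: "uu(0 := U) = uu" "uu(0 := U, Suc 0 := U) = uu"
  by (auto simp: uu_def fun_eq_iff)
lemma il_uu: "info_le uu v"
  by (simp add: info_le_def uu_def)
lemma il_uu2: "info_le (uu(0 := x)) uu \<longleftrightarrow> x = U" "info_le (uu(0 := x, Suc 0 := y)) uu \<longleftrightarrow> x = U \<and> y = U"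
  by (auto simp: info_le_def uu_def)
lemma in_interps: "uu \<in> interps A" "uu(0 := x) \<in> interps {0}" "uu(0 := x, Suc 0 := y) \<in> interps {0,Suc 0}"
  by (auto simp: interps_def uu_def)

lemma uu_app: "uu x = U" by (simp add: uu_def)

lemmas S = uu_app upd_U il_uu il_uu2 in_interps il1 il2 upd_eq1 upd_eq2 upd_uu1 upd_uu2 st_D

lemma adm_DT: "adm DT = {uu, uu(0 := T)}"
proof (rule set_eqI, rule iffI)
  fix v assume "v \<in> adm DT"
  then obtain x where v: "v = uu(0:=x)" "info_le v (uu(0:=T))" by (auto simp: adm_def GT st_D interps1)
  then show "v \<in> {uu, uu(0 := T)}" by (cases x) (auto simp: S)
qed (auto simp: adm_def GT S)

lemma cmp_DT: "cmp DT = {uu(0 := T)}"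
  by (auto simp: cmp_def GT S)

lemma prefd_DT: "prefd DT = {uu(0 := T)}"
  by (auto simp: prefd_def adm_DT S)

lemma adm_DN: "adm DN = {uu}"
proof (rule set_eqI, rule iffI)
  fix v assume "v \<in> adm DN"
  then obtain x where v: "v = uu(0:=x)" "info_le v (uu(0:=neg x))" by (auto simp: adm_def GN st_D interps1)
  then show "v \<in> {uu}" by (cases x) (auto simp: S)
qed (auto simp: adm_def GN S)

lemma cmp_DN: "cmp DN = {uu}"
proof (rule set_eqI, rule iffI)
  fix v assume "v \<in> cmp DN"
  then obtain x where v: "v = uu(0:=x)" "uu(0:=neg x) = uu(0 := x)" by (auto simp: cmp_def GN st_D interps1)
  then show "v \<in> {uu}" by (cases x) (auto simp: S)
qed (auto simp: cmp_def GN S)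

lemma prefd_DN: "prefd DN = {uu}"
  by (auto simp: prefd_def adm_DN S)

lemma mdl_DN: "mdl DN = {}"
proof -
  have "v \<notin> mdl DN" for v
  proof
    assume "v \<in> mdl DN"
    then obtain x where v: "v = uu(0:=x)" "uu(0:=neg x) = uu(0 := x)" "x \<noteq> U"
      by (auto simp: mdl_def GN st_D interps1 two_valued_on_def)
    then show False by (cases x) (auto simp: S)
  qed
  then show ?thesis by auto
qed

abbreviation "v1 \<equiv> uu(0 := T, Suc 0 := F)"
abbreviation "v2 \<equiv> uu(0 := F, Suc 0 := T)"

lemma adm_DM: "adm DM = {uu, v1, v2}"
proof (rule set_eqI, rule iffI)
  fix v assume "v \<in> adm DM"
  then obtain x y where v: "v = uu(0:=x, Suc 0:=y)" "info_le v (uu(0:=neg y, Suc 0 := neg x))"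
    by (auto simp: adm_def GM st_D interps2)
  then show "v \<in> {uu, v1, v2}" by (cases x; cases y)
    (auto simp: info_le_def fun_eq_iff uu_def dest: spec[of _ 0] spec[of _ "Suc 0"])
qed (auto simp: adm_def GM S)

lemma cmp_DM: "cmp DM = {uu, v1, v2}"
proof (rule set_eqI, rule iffI)
  fix v assume "v \<in> cmp DM"
  then obtain x y where v: "v = uu(0:=x, Suc 0:=y)" "uu(0:=neg y, Suc 0 := neg x) = uu(0:=x, Suc 0:=y)"
    by (auto simp: cmp_def GM st_D interps2)
  then show "v \<in> {uu, v1, v2}" by (cases x; cases y)
    (auto simp: info_le_def fun_eq_iff uu_def dest: spec[of _ 0] spec[of _ "Suc 0"])
qed (auto simp: cmp_def GM S)

lemma prefd_DM: "prefd DM = {v1, v2}"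
  by (auto simp: prefd_def adm_DM S)

lemma mdl_DM: "mdl DM = {v1, v2}"
proof (rule set_eqI, rule iffI)
  fix v assume "v \<in> mdl DM"
  then obtain x y where v: "v = uu(0:=x, Suc 0:=y)" "uu(0:=neg y, Suc 0 := neg x) = uu(0:=x, Suc 0:=y)"
    "x \<noteq> U" "y \<noteq> U"
    by (auto simp: mdl_def GM st_D interps2 two_valued_on_def)
  then show "v \<in> {v1, v2}" by (cases x; cases y) (auto simp: S)
qed (auto simp: mdl_def GM S two_valued_on_def)

lemma sig_intro: "D \<in> kbs Fm \<Longrightarrow> stmts D = A \<Longrightarrow> sem s D \<in> signature Fm s A"
  unfolding signature_def by (intro CollectI exI[of _ D]) simp

lemma wit: "sem s DT \<in> signature Fm s {0}" "sem s DN \<in> signature Fm s {0}"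
  "sem s DM \<in> signature Fm s {0, Suc 0}"
proof -
  have k: "DT \<in> kbs Fm" "DN \<in> kbs Fm" "DM \<in> kbs Fm"
    unfolding DT_def DN_def DM_def by (rule af_kbs; simp)+
  show "sem s DT \<in> signature Fm s {0}" by (rule sig_intro[OF k(1) st_D(1)])
  show "sem s DN \<in> signature Fm s {0}" by (rule sig_intro[OF k(2) st_D(2)])
  show "sem s DM \<in> signature Fm s {0, Suc 0}" by (rule sig_intro[OF k(3)]) (simp add: st_D(3))
qed

lemma sig_elim: "S \<in> signature Fm s A \<Longrightarrow> \<exists>D. stmts D = A \<and> S = sem s D"
  unfolding signature_def by blast

lemma sep_gen:
  assumes S: "S \<in> signature F1 s1 A" and fin: "finite A"
    and ne: "\<And>D. stmts D = A \<Longrightarrow> sem s2 D \<noteq> S"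
  shows "\<not> le_e F1 s1 F2 s2"
proof
  assume "le_e F1 s1 F2 s2"
  then have "signature F1 s1 A \<subseteq> signature F2 s2 A" using fin unfolding le_e_def by blast
  then have "S \<in> signature F2 s2 A" using S by (rule subsetD)
  then obtain D where "stmts D = A" "S = sem s2 D" using sig_elim by blast
  then show False using ne by blast
qed

lemma tf_ne: "uu(0 := F) \<noteq> uu" "uu(0 := F) \<noteq> uu(0 := T)" "uu(0 := T) \<noteq> uu"
  "v1 \<noteq> uu" "v2 \<noteq> uu"
  by (auto simp: fun_eq_iff uu_def)

lemma fin1: "finite {0::nat}" by simp
lemma fin2: "finite {0::nat}" by simp
lemma fin3: "finite {0::nat, Suc 0}" by simp

lemma tf_ne2: "uu \<noteq> v1" "uu \<noteq> v2"
  by (auto simp: fun_eq_iff uu_def)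

lemma v12: "\<forall>a. v1 a \<noteq> v2 a \<or> v1 a = U"
  by (simp add: uu_def)

lemma sep_Adm_Com: "\<not> le_e F1 Adm F2 Com"
proof -
  have key: "cmp D \<noteq> adm DT" if st: "stmts D = {0}" for D
  proof
    assume "cmp D = adm DT"
    then have c: "cmp D = {uu, uu(0 := T)}" using adm_DT by simp
    then have "uu(0 := F) \<in> cmp D" using G6[OF st] by simp
    then show False using c tf_ne by blast
  qed
  show ?thesis
  proof (rule sep_gen[OF wit(1)[of Adm F1] fin1])
    fix D :: adf assume "stmts D = {0}"
    then show "sem Com D \<noteq> sem Adm DT"
      using key by (simp only: sem.simps not_False_eq_True)
  qed
qed

lemma sep_Com_Adm: "\<not> le_e F1 Com F2 Adm"
proof -
  have key: "adm D \<noteq> cmp DT" if st: "stmts D = {0}" for D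
  proof
    assume h: "adm D = cmp DT"
    have m: "uu \<in> {uu(0 := T)}" using G1[OF st] h cmp_DT by simp
    show False using m tf_ne(3) by (metis singletonD)
  qed
  show ?thesis
  proof (rule sep_gen[OF wit(1)[of Com F1] fin1])
    fix D :: adf assume "stmts D = {0}"
    then show "sem Adm D \<noteq> sem Com DT"
      using key by (simp only: sem.simps not_False_eq_True)
  qed
qed

lemma sep_Adm_Prf: "\<not> le_e F1 Adm F2 Prf"
proof -
  have key: "prefd D \<noteq> adm DT" if st: "stmts D = {0}" for D
  proof
    assume h: "prefd D = adm DT"
    have m: "uu \<in> prefd D" "uu(0 := T) \<in> prefd D" unfolding h adm_DT by blast+
    show False using G3[OF m] tf_ne(3) by blast
  qed
  show ?thesis
  proof (rule sep_gen[OF wit(1)[of Adm F1] fin1])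
    fix D :: adf assume "stmts D = {0}"
    then show "sem Prf D \<noteq> sem Adm DT"
      using key by (simp only: sem.simps not_False_eq_True)
  qed
qed

lemma sep_Prf_Adm: "\<not> le_e F1 Prf F2 Adm"
proof -
  have key: "adm D \<noteq> prefd DT" if st: "stmts D = {0}" for D
  proof
    assume h: "adm D = prefd DT"
    have m: "uu \<in> {uu(0 := T)}" using G1[OF st] h prefd_DT by simp
    show False using m tf_ne(3) by (metis singletonD)
  qed
  show ?thesis
  proof (rule sep_gen[OF wit(1)[of Prf F1] fin1])
    fix D :: adf assume "stmts D = {0}"
    then show "sem Adm D \<noteq> sem Prf DT"
      using key by (simp only: sem.simps not_False_eq_True)
  qed
qed

lemma sep_Adm_Mod: "\<not> le_e F1 Adm F2 Mod"
proof -
  have key: "mdl D \<noteq> adm DN" if st: "stmts D = {0}" for D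
  proof
    assume h: "mdl D = adm DN"
    have m: "uu \<in> mdl D" unfolding h adm_DN by blast+
    show False using m G2[OF _ st] by blast
  qed
  show ?thesis
  proof (rule sep_gen[OF wit(2)[of Adm F1] fin2])
    fix D :: adf assume "stmts D = {0}"
    then show "sem Mod D \<noteq> sem Adm DN"
      using key by (simp only: sem.simps not_False_eq_True)
  qed
qed

lemma sep_Mod_Adm: "\<not> le_e F1 Mod F2 Adm"
proof -
  have key: "adm D \<noteq> mdl DN" if st: "stmts D = {0}" for D
  proof
    assume h: "adm D = mdl DN"
    have m: "uu \<in> ({} :: (nat \<Rightarrow> tv) set)" using G1[OF st] h mdl_DN by simp
    show False using m  by auto
  qed
  show ?thesis
  proof (rule sep_gen[OF wit(2)[of Mod F1] fin2])
    fix D :: adf assume "stmts D = {0}"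
    then show "sem Adm D \<noteq> sem Mod DN"
      using key by (simp only: sem.simps not_False_eq_True)
  qed
qed

lemma sep_Com_Prf: "\<not> le_e F1 Com F2 Prf"
proof -
  have key: "prefd D \<noteq> cmp DM" if st: "stmts D = {0, Suc 0}" for D
  proof
    assume h: "prefd D = cmp DM"
    have m: "uu \<in> prefd D" "v1 \<in> prefd D" unfolding h cmp_DM by blast+
    show False using G3[OF m] tf_ne(4) by blast
  qed
  show ?thesis
  proof (rule sep_gen[OF wit(3)[of Com F1] fin3])
    fix D :: adf assume "stmts D = {0, Suc 0}"
    then show "sem Prf D \<noteq> sem Com DM"
      using key by (simp only: sem.simps not_False_eq_True)
  qed
qed

lemma sep_Prf_Com: "\<not> le_e F1 Prf F2 Com"
proof -
  have key: "cmp D \<noteq> prefd DM" if st: "stmts D = {0, Suc 0}" for D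
  proof
    assume h: "cmp D = prefd DM"
    have m: "v1 \<in> cmp D" "v2 \<in> cmp D" unfolding h prefd_DM by blast+
    have "uu \<in> {v1, v2}" using G5[OF m v12] unfolding h prefd_DM .
    then have "uu = v1 \<or> uu = v2" by blast
    then show False using tf_ne2 by blast
  qed
  show ?thesis
  proof (rule sep_gen[OF wit(3)[of Prf F1] fin3])
    fix D :: adf assume "stmts D = {0, Suc 0}"
    then show "sem Com D \<noteq> sem Prf DM"
      using key by (simp only: sem.simps not_False_eq_True)
  qed
qed

lemma sep_Com_Mod: "\<not> le_e F1 Com F2 Mod"
proof -
  have key: "mdl D \<noteq> cmp DN" if st: "stmts D = {0}" for D
  proof
    assume h: "mdl D = cmp DN"
    have m: "uu \<in> mdl D" unfolding h cmp_DN by blast+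
    show False using m G2[OF _ st] by blast
  qed
  show ?thesis
  proof (rule sep_gen[OF wit(2)[of Com F1] fin2])
    fix D :: adf assume "stmts D = {0}"
    then show "sem Mod D \<noteq> sem Com DN"
      using key by (simp only: sem.simps not_False_eq_True)
  qed
qed

lemma sep_Mod_Com: "\<not> le_e F1 Mod F2 Com"
proof -
  have key: "cmp D \<noteq> mdl DM" if st: "stmts D = {0, Suc 0}" for D
  proof
    assume h: "cmp D = mdl DM"
    have m: "v1 \<in> cmp D" "v2 \<in> cmp D" unfolding h mdl_DM by blast+
    have "uu \<in> {v1, v2}" using G5[OF m v12] unfolding h mdl_DM .
    then have "uu = v1 \<or> uu = v2" by blast
    then show False using tf_ne2 by blast
  qed
  show ?thesis
  proof (rule sep_gen[OF wit(3)[of Mod F1] fin3])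
    fix D :: adf assume "stmts D = {0, Suc 0}"
    then show "sem Com D \<noteq> sem Mod DM"
      using key by (simp only: sem.simps not_False_eq_True)
  qed
qed

lemma sep_Prf_Mod: "\<not> le_e F1 Prf F2 Mod"
proof -
  have key: "mdl D \<noteq> prefd DN" if st: "stmts D = {0}" for D
  proof
    assume h: "mdl D = prefd DN"
    have m: "uu \<in> mdl D" unfolding h prefd_DN by blast+
    show False using m G2[OF _ st] by blast
  qed
  show ?thesis
  proof (rule sep_gen[OF wit(2)[of Prf F1] fin2])
    fix D :: adf assume "stmts D = {0}"
    then show "sem Mod D \<noteq> sem Prf DN"
      using key by (simp only: sem.simps not_False_eq_True)
  qed
qed

lemma sep_Mod_Prf: "\<not> le_e F1 Mod F2 Prf"
proof -
  have key: "prefd D \<noteq> mdl DN" if st: "stmts D = {0}" for D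
  proof
    assume h: "prefd D = mdl DN"
    have m: "prefd D = {}" unfolding h mdl_DN by blast+
    show False using m G7[of D] st by simp
  qed
  show ?thesis
  proof (rule sep_gen[OF wit(2)[of Mod F1] fin2])
    fix D :: adf assume "stmts D = {0}"
    then show "sem Prf D \<noteq> sem Mod DN"
      using key by (simp only: sem.simps not_False_eq_True)
  qed
qed

lemma sep: "s1 \<noteq> s2 \<Longrightarrow> \<not> le_e F1 s1 F2 s2"
  by (cases s1; cases s2) (simp_all add: sep_Adm_Com sep_Com_Adm sep_Adm_Prf sep_Prf_Adm sep_Adm_Mod sep_Mod_Adm sep_Com_Prf sep_Prf_Com sep_Com_Mod sep_Mod_Com sep_Prf_Mod sep_Mod_Prf)

theorem proposition6:
  fixes F1 F2 :: formalism and s1 s2 :: semantics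
  assumes "s1 \<noteq> s2"
  shows "\<not> le_e F1 s1 F2 s2 \<and> \<not> le_e F2 s2 F1 s1"
  using sep[OF assms] sep[of s2 s1] assms by auto

end
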